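(* Let $q$ be an odd prime power and $n=\frac{q^3+1}{2}$. For an integer $\delta$ with $1\le\delta-1\le\frac{q^2-1}{2}$ put $\epsilon=\lceil(\delta-1)(1-q^{-1})\rceil$. Then $\mathcal{C}_{(n,q,\delta,1)}$ has parameters $[n,k,d\ge\delta]$ and $\mathcal{C}_{(n,q,\delta+1,0)}$ has parameters $[n,k-1,d\ge2\delta]$, where $k=n-6\epsilon$ if $2\le\delta\le\frac{q^2-1}{2}-\frac{q-3}{2}$, and $k=n-6\epsilon+6\big(\delta-\frac{q^2-1}{2}+\lfloor\frac{q-2}{2}\rfloor\big)$ if $\frac{q^2-1}{2}-\frac{q-3}{2}<\delta\le\frac{q^2-1}{2}+1$.
   Context: Let $q$ be a prime power and $n\ge2$ an integer with $\gcd(n,q)=1$. Let $\ell=\mathrm{ord}_n(q)$, let $\alpha$ be a generator of $\mathbb{F}_{q^\ell}^*$, $\beta=\alpha^{(q^\ell-1)/n}$, and let $m_i(x)$ be the minimal polynomial of $\beta^i$ over $\mathbb{F}_q$. For integers $b\ge0$ and $2\le\delta\le n$, $\mathcal{C}_{(n,q,\delta,b)}$ denotes the cyclic (BCH) code of length $n$ over $\mathbb{F}_q$ with generator polynomial $\mathrm{lcm}(m_b(x),\dots,m_{b+\delta-2}(x))$. $[n,k,d\ge D]$ means length $n$, dimension $k$, minimum Hamming distance at least $D$. *)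

theory Defs
  imports "HOL-Computational_Algebra.Computational_Algebra" "HOL-Number_Theory.Number_Theory"
begin

definition field_emb :: "('a::field \<Rightarrow> 'b::field) \<Rightarrow> bool" where
  "field_emb e \<longleftrightarrow> e 1 = 1 \<and> (\<forall>x y. e (x + y) = e x + e y) \<and> (\<forall>x y. e (x * y) = e x * e y)"

definition min_poly :: "('a::field \<Rightarrow> 'b::field) \<Rightarrow> 'b \<Rightarrow> 'a poly" where
  "min_poly e x = (THE p. lead_coeff p = 1 \<and> poly (map_poly e p) x = 0 \<and>
      (\<forall>r. poly (map_poly e r) x = 0 \<longrightarrow> p dvd r))"

text \<open>Generator polynomial of the BCH code C_(n,q,delta,b), where alpha generates the
  multiplicative group of the extension field 'b (of order q^ell) and beta = alpha^((q^ell-1)/n).\<close>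
definition bch_gen :: "('a::field_gcd \<Rightarrow> 'b::field) \<Rightarrow> 'b \<Rightarrow> nat \<Rightarrow> nat \<Rightarrow> nat \<Rightarrow> 'a poly" where
  "bch_gen e \<alpha> n \<delta> b =
     (let \<beta> = \<alpha> ^ ((card (UNIV :: 'b set) - 1) div n)
      in Lcm ((\<lambda>i. min_poly e (\<beta> ^ i)) ` {b .. b + \<delta> - 2}))"

text \<open>The cyclic code of length n generated by g, as a subset of F_q[x]/(x^n-1), represented by
  the polynomials of degree < n (codeword (c_0,...,c_{n-1}) is c_0 + c_1 x + ... + c_{n-1} x^{n-1}).\<close>
definition cyclic_code :: "nat \<Rightarrow> 'a::field poly \<Rightarrow> 'a poly set" where
  "cyclic_code n g = {c. degree c < n \<and> g dvd c}"

definition bch_code :: "('a::field_gcd \<Rightarrow> 'b::field) \<Rightarrow> 'b \<Rightarrow> nat \<Rightarrow> nat \<Rightarrow> nat \<Rightarrow> 'a poly set" where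
  "bch_code e \<alpha> n \<delta> b = cyclic_code n (bch_gen e \<alpha> n \<delta> b)"

definition hweight :: "'a::zero poly \<Rightarrow> nat" where
  "hweight c = card {i. Polynomial.coeff c i \<noteq> 0}"

text \<open>Minimum distance at least D (for a linear code: minimal weight of a nonzero codeword).\<close>
definition min_dist_ge :: "'a::zero poly set \<Rightarrow> nat \<Rightarrow> bool" where
  "min_dist_ge C D \<longleftrightarrow> (\<forall>c\<in>C. c \<noteq> 0 \<longrightarrow> D \<le> hweight c)"

text \<open>[n,k,d>=D] code over F_q (q = CARD('a)): code length n (codewords of degree < n),
  dimension k over F_q (equivalently q^k codewords), minimum distance >= D.\<close>
definition code_params :: "'a::field poly set \<Rightarrow> nat \<Rightarrow> nat \<Rightarrow> nat \<Rightarrow> bool" where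
  "code_params C n k D \<longleftrightarrow> (\<forall>c\<in>C. degree c < n) \<and> card C = card (UNIV :: 'a set) ^ k \<and> min_dist_ge C D"

end

theory Submission
  imports Defs
begin


lemma fin_field_pow_card:
  fixes x :: "'b::{field,finite}"
  shows "x ^ card (UNIV :: 'b set) = x"
proof (cases "x = 0")
  case False
  have "x * (\<Prod>y\<in>UNIV-{0}. x * y) = x * x ^ (card (UNIV :: 'b set) - 1) * \<Prod>(UNIV-{0})"
    by (simp add: prod.distrib mult_ac)
  also have "x * x ^ (card (UNIV :: 'b set) - 1) = x ^ Suc (card (UNIV :: 'b set) - 1)"
    by (subst power_Suc) auto
  also have "Suc (card (UNIV :: 'b set) - 1) = card (UNIV :: 'b set)"
    using finite_UNIV_card_ge_0[where ?'a = 'b] by simp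
  also have "(\<Prod>y\<in>UNIV-{0}. x * y) = (\<Prod>y\<in>UNIV-{0}. y)"
    by (rule prod.reindex_bij_witness[of _ "\<lambda>y. y / x" "\<lambda>y. x * y"]) (use False in auto)
  finally show ?thesis
    by simp
qed (use finite_UNIV_card_ge_0[where ?'a = 'b] in auto)

lemma fin_field_card_ge2: "card (UNIV :: 'b::{field,finite} set) \<ge> 2"
proof -
  have "{0, 1::'b} \<subseteq> UNIV" by auto
  hence "card {0,1::'b} \<le> card (UNIV :: 'b set)" by (intro card_mono) auto
  thus ?thesis by simp
qed

context
  fixes f :: "'a::field \<Rightarrow> 'b::field"
  assumes fe: "field_emb f"
begin

lemma fe_add: "f (x + y) = f x + f y" and fe_mult: "f (x * y) = f x * f y" and fe_1: "f 1 = 1"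
  using fe unfolding field_emb_def by auto

lemma fe_0: "f 0 = 0"
proof -
  have "f 0 + f 0 = f 0 + 0" using fe_add[of 0 0] by simp
  thus ?thesis by (simp only: add_left_cancel)
qed

lemma fe_uminus: "f (- x) = - f x"
proof -
  have "f (x + - x) = f x + f (- x)" by (rule fe_add)
  thus ?thesis by (simp add: fe_0 eq_neg_iff_add_eq_0 add.commute)
qed

lemma fe_diff: "f (x - y) = f x - f y"
  using fe_add[of x "-y"] fe_uminus[of y] by simp

lemma fe_eq_0_iff: "f x = 0 \<longleftrightarrow> x = 0"
proof
  assume "f x = 0"
  show "x = 0"
  proof (rule ccontr)
    assume "x \<noteq> 0"
    hence "f (x * inverse x) = 1" by (simp add: fe_1)
    with \<open>f x = 0\<close> show False by (simp add: fe_mult)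
  qed
qed (simp add: fe_0)

lemma fe_inj: "inj f"
proof (rule injI)
  fix x y assume "f x = f y"
  hence "f (x - y) = 0" by (simp add: fe_diff)
  thus "x = y" by (simp add: fe_eq_0_iff)
qed

lemma fe_power: "f (x ^ k) = f x ^ k"
  by (induction k) (simp_all add: fe_1 fe_mult)

lemma fe_sum: "f (sum g A) = sum (\<lambda>i. f (g i)) A"
  by (induction A rule: infinite_finite_induct) (simp_all add: fe_0 fe_add)

lemma fe_of_nat: "f (of_nat m) = of_nat m"
  by (induction m) (simp_all add: fe_0 fe_1 fe_add)

lemma map_poly_fe_add: "map_poly f (p + q) = map_poly f p + map_poly f q"
  by (intro poly_eqI) (simp add: coeff_map_poly fe_0 fe_add)

lemma map_poly_fe_uminus: "map_poly f (- p) = - map_poly f p"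
  by (intro poly_eqI) (simp add: coeff_map_poly fe_0 fe_uminus)

lemma map_poly_fe_diff: "map_poly f (p - q) = map_poly f p - map_poly f q"
  by (intro poly_eqI) (simp add: coeff_map_poly fe_0 fe_diff)

lemma map_poly_fe_mult: "map_poly f (p * q) = map_poly f p * map_poly f q"
proof (induction p rule: pCons_induct)
  case (pCons a p)
  have "map_poly f (pCons a p * q) = map_poly f (Polynomial.smult a q + pCons 0 (p * q))"
    by simp
  also have "\<dots> = Polynomial.smult (f a) (map_poly f q) + pCons 0 (map_poly f p * map_poly f q)"
    by (simp add: map_poly_fe_add map_poly_smult fe_0 fe_mult map_poly_pCons pCons.IH)
  also have "\<dots> = map_poly f (pCons a p) * map_poly f q"
    by (simp add: map_poly_pCons fe_0)
  finally show ?case .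
qed simp

lemma map_poly_fe_1: "map_poly f 1 = 1"
  by (simp add: fe_1)

lemma map_poly_fe_prod: "map_poly f (prod g A) = prod (\<lambda>i. map_poly f (g i)) A"
  by (induction A rule: infinite_finite_induct) (simp_all add: map_poly_fe_1 map_poly_fe_mult)

lemma map_poly_fe_dvd: "p dvd q \<Longrightarrow> map_poly f p dvd map_poly f q"
  by (auto simp: map_poly_fe_mult elim!: dvdE)

lemma degree_map_poly_fe: "degree (map_poly f p) = degree p"
  by (rule degree_map_poly) (simp add: fe_eq_0_iff)

lemma map_poly_fe_eq_0: "map_poly f p = 0 \<longleftrightarrow> p = 0"
  by (rule map_poly_eq_0_iff) (simp_all add: fe_0 fe_eq_0_iff)

lemma poly_map_poly_fe: "poly (map_poly f p) (f x) = f (poly p x)"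
  by (induction p rule: pCons_induct) (simp_all add: map_poly_pCons fe_0 fe_add fe_mult)

lemma lead_coeff_map_poly_fe: "lead_coeff (map_poly f p) = f (lead_coeff p)"
  by (simp add: degree_map_poly_fe coeff_map_poly fe_0)

end


locale bch =
  fixes e :: "'a::{field_gcd,finite} \<Rightarrow> 'b::{field,finite}" and \<alpha> :: 'b and q n :: nat
  assumes emb: "field_emb e"
    and cardA: "card (UNIV::'a set) = q"
    and gen: "\<forall>y::'b. y \<noteq> 0 \<longrightarrow> (\<exists>j. y = \<alpha>^j)"
    and ndvd: "n dvd card (UNIV::'b set) - 1"
    and n2: "n \<ge> 2"
begin

definition NN where "NN = card (UNIV::'b set)"
definition phi :: "'b \<Rightarrow> 'b" where "phi x = x ^ q"

lemma q2: "q \<ge> 2" using fin_field_card_ge2[where 'b='a] cardA by simp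

lemma pow_q_a: "(a::'a) ^ q = a" using fin_field_pow_card[of a] cardA by simp

lemma binom_zero_a:
  assumes "0 < k" "k < q"
  shows "of_nat (q choose k) = (0::'a)"
proof -
  define P :: "'a poly" where "P = [:1,1:]^q - Polynomial.monom 1 q - 1"
  have roots: "poly P a = 0" for a
    unfolding P_def by (simp add: poly_power poly_monom pow_q_a)
  have cq: "Polynomial.coeff P i = 0" if "i \<ge> q" for i
  proof (cases "i = q")
    case True thus ?thesis using q2 by (simp add: P_def coeff_linear_power)
  next
    case False
    hence "i > q" using that by simp
    moreover have "degree ([:1,1::'a:]^q) \<le> q"
      using degree_power_le[of "[:1,1::'a:]" q] by simp
    ultimately have "Polynomial.coeff ([:1,1::'a:]^q) i = 0" by (intro coeff_eq_0) simp
    thus ?thesis using \<open>i > q\<close> q2 by (simp add: P_def coeff_monom)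
  qed
  have "P = 0"
  proof (rule ccontr)
    assume "P \<noteq> 0"
    have "degree P \<le> q - 1" by (rule degree_le) (use cq in auto)
    moreover have "card {x. poly P x = 0} \<le> degree P" by (rule card_poly_roots_bound) fact
    moreover have "{x. poly P x = 0} = UNIV" using roots by auto
    ultimately show False using cardA q2 by simp
  qed
  hence "Polynomial.coeff P k = 0" by simp
  thus ?thesis using assms
    by (simp add: P_def coeff_linear_poly_power coeff_monom coeff_1)
qed

lemma binom_zero_b:
  assumes "0 < k" "k < q"
  shows "of_nat (q choose k) = (0::'b)"
  using binom_zero_a[OF assms] fe_of_nat[OF emb, of "q choose k"] fe_0[OF emb] by simp

lemma phi_add: "phi (x + y) = phi x + phi y"
proof -
  have "(x + y) ^ q = (\<Sum>k\<le>q. of_nat (q choose k) * x ^ k * y ^ (q - k))"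
    by (rule binomial_ring)
  also have "\<dots> = (\<Sum>k\<in>{0,q}. of_nat (q choose k) * x ^ k * y ^ (q - k))"
  proof (intro sum.mono_neutral_right ballI)
    fix k assume "k \<in> {..q} - {0, q}"
    hence k: "k > 0" "k < q" by auto
    show "of_nat (q choose k) * x ^ k * y ^ (q - k) = 0"
      using binom_zero_b[OF k] by simp
  qed auto
  finally show ?thesis using q2 by (simp add: phi_def add_ac)
qed

lemma phi_emb: "field_emb phi"
  unfolding field_emb_def using phi_add by (simp add: phi_def power_mult_distrib)

lemma phi_e: "phi (e a) = e a"
  unfolding phi_def using fe_power[OF emb, of a q] pow_q_a by simp

lemma range_e: "range e = {y. phi y = y}"
proof -
  have sub: "range e \<subseteq> {y. phi y = y}" using phi_e by auto
  define P :: "'b poly" where "P = Polynomial.monom 1 q - [:0,1:]"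
  have "Polynomial.coeff [:0,1::'b:] q = 0" using q2 by (intro coeff_eq_0) simp
  hence "Polynomial.coeff P q = 1" using q2 by (simp add: P_def coeff_monom)
  hence "P \<noteq> 0" by auto
  have "degree P \<le> q" unfolding P_def
    by (rule order.trans[OF degree_diff_le_max]) (use q2 in \<open>auto simp: degree_monom_eq\<close>)
  have "{y. phi y = y} = {y. poly P y = 0}" by (auto simp: P_def phi_def poly_monom)
  hence c1: "card {y. phi y = y} \<le> q"
    using card_poly_roots_bound[OF \<open>P \<noteq> 0\<close>] \<open>degree P \<le> q\<close> by simp
  have c2: "card (range e) = q" using card_image[OF fe_inj[OF emb]] cardA by simp
  have c3: "card (range e) \<le> card {y. phi y = y}" by (rule card_mono) (simp_all add: sub)
  show ?thesis
    by (rule card_subset_eq) (use sub c1 c2 c3 in auto)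
qed

lemma inv_e_0: "inv_into UNIV e 0 = 0"
  using fe_0[OF emb] inv_f_f[OF fe_inj[OF emb], of 0] by simp

lemma fixed_poly:
  assumes "map_poly phi P = P"
  shows "map_poly e (map_poly (inv_into UNIV e) P) = P"
proof (rule poly_eqI)
  fix i
  have "phi (Polynomial.coeff P i) = Polynomial.coeff P i"
    using arg_cong[OF assms, of "\<lambda>p. Polynomial.coeff p i"] by (simp add: coeff_map_poly fe_0[OF phi_emb])
  hence "Polynomial.coeff P i \<in> range e" using range_e by auto
  thus "Polynomial.coeff (map_poly e (map_poly (inv_into UNIV e) P)) i = Polynomial.coeff P i"
    by (simp add: coeff_map_poly fe_0[OF emb] inv_e_0 f_inv_into_f)
qed

lemma root_phi:
  assumes "poly (map_poly e r) x = 0"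
  shows "poly (map_poly e r) (phi x) = 0"
proof -
  have "map_poly phi (map_poly e r) = map_poly e r"
    by (intro poly_eqI) (simp add: coeff_map_poly fe_0[OF emb] fe_0[OF phi_emb] phi_e)
  hence "poly (map_poly e r) (phi x) = poly (map_poly phi (map_poly e r)) (phi x)" by simp
  also have "\<dots> = phi (poly (map_poly e r) x)" by (rule poly_map_poly_fe[OF phi_emb])
  finally show ?thesis using assms fe_0[OF phi_emb] by simp
qed

lemma root_phi_iter:
  assumes "poly (map_poly e r) x = 0"
  shows "poly (map_poly e r) (x ^ (q ^ t)) = 0"
proof (induction t)
  case 0 thus ?case using assms by simp
next
  case (Suc t)
  have "x ^ (q ^ Suc t) = phi (x ^ (q ^ t))" by (metis phi_def power_Suc2 power_mult)
  thus ?case using root_phi[OF Suc] by simp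
qed

end


context bch begin

definition \<beta> where "\<beta> = \<alpha> ^ ((NN - 1) div n)"

lemma NN_ge: "NN - 1 \<ge> n"
proof -
  have "NN \<ge> 2" unfolding NN_def by (rule fin_field_card_ge2)
  hence "NN - 1 > 0" by simp
  thus ?thesis using ndvd unfolding NN_def[symmetric] by (simp add: dvd_imp_le)
qed

lemma alpha_nz: "\<alpha> \<noteq> 0"
proof
  assume a0: "\<alpha> = 0"
  have "\<not> UNIV \<subseteq> {0, 1::'b}"
  proof
    assume "UNIV \<subseteq> {0, 1::'b}"
    hence "NN \<le> card {0,1::'b}" unfolding NN_def by (intro card_mono) auto
    thus False using NN_ge n2 by (simp add: card_insert_if)
  qed
  then obtain y :: 'b where y: "y \<noteq> 0" "y \<noteq> 1" by auto
  then obtain j where "y = \<alpha> ^ j" using gen by auto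
  thus False using y a0 by (cases j) auto
qed

lemma alpha_pow_NN1: "\<alpha> ^ (NN - 1) = 1"
proof -
  have "\<alpha> ^ NN = \<alpha>" unfolding NN_def by (rule fin_field_pow_card)
  moreover have "NN = Suc (NN - 1)" using NN_ge n2 by simp
  ultimately have "\<alpha> * \<alpha> ^ (NN - 1) = \<alpha> * 1" by (metis power_Suc mult_1_right)
  thus ?thesis using alpha_nz by simp
qed

lemma alpha_order:
  assumes "\<alpha> ^ k = 1" "0 < k"
  shows "NN - 1 \<le> k"
proof -
  have "UNIV - {0} \<subseteq> (\<lambda>j. \<alpha> ^ j) ` {..<k}"
  proof
    fix y :: 'b assume "y \<in> UNIV - {0}"
    then obtain j where j: "y = \<alpha> ^ j" using gen by auto
    have "\<alpha> ^ j = \<alpha> ^ (k * (j div k) + j mod k)" by simp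
    also have "\<dots> = (\<alpha> ^ k) ^ (j div k) * \<alpha> ^ (j mod k)" by (simp only: power_add power_mult)
    also have "\<dots> = \<alpha> ^ (j mod k)" using assms(1) by simp
    finally show "y \<in> (\<lambda>j. \<alpha> ^ j) ` {..<k}" using j assms(2) by auto
  qed
  hence "card (UNIV - {0::'b}) \<le> card ((\<lambda>j. \<alpha> ^ j) ` {..<k})" by (intro card_mono) auto
  also have "\<dots> \<le> k" using card_image_le[of "{..<k}" "\<lambda>j. \<alpha> ^ j"] by simp
  finally show ?thesis by (simp add: NN_def card_Diff_singleton)
qed

lemma beta_pow_n: "\<beta> ^ n = 1"
proof -
  have "(NN - 1) div n * n = NN - 1" using ndvd unfolding NN_def[symmetric] by simp
  thus ?thesis unfolding \<beta>_def by (metis power_mult alpha_pow_NN1)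
qed

lemma beta_nz: "\<beta> \<noteq> 0" unfolding \<beta>_def using alpha_nz by simp

lemma beta_pow_mod: "\<beta> ^ a = \<beta> ^ (a mod n)"
proof -
  have "\<beta> ^ a = \<beta> ^ (n * (a div n) + a mod n)" by simp
  also have "\<dots> = (\<beta> ^ n) ^ (a div n) * \<beta> ^ (a mod n)" by (simp only: power_add power_mult)
  also have "\<dots> = \<beta> ^ (a mod n)" by (simp add: beta_pow_n)
  finally show ?thesis .
qed

lemma beta_cong: "[a = b] (mod n) \<Longrightarrow> \<beta> ^ a = \<beta> ^ b"
  unfolding cong_def by (metis beta_pow_mod)

lemma beta_pow_eq_1: assumes "\<beta> ^ j = 1" shows "n dvd j"
proof (rule ccontr)
  assume "\<not> n dvd j"
  define r where "r = j mod n"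
  have r: "0 < r" "r < n" using \<open>\<not> n dvd j\<close> n2 by (auto simp: r_def mod_eq_0_iff_dvd[symmetric])
  define d where "d = (NN - 1) div n"
  have dn: "d * n = NN - 1" using ndvd unfolding NN_def[symmetric] d_def by simp
  have d: "d > 0" using dn NN_ge n2 by (cases d) auto
  have "\<alpha> ^ (d * r) = 1" using assms beta_pow_mod[of j]
    by (simp add: \<beta>_def d_def r_def power_mult)
  moreover have "d * r < NN - 1" using dn r d by (metis mult_less_cancel1)
  moreover have "0 < d * r" using d r by simp
  ultimately show False using alpha_order by fastforce
qed

lemma beta_inj: "inj_on (\<lambda>i. \<beta> ^ i) {..<n}"
proof (rule inj_onI)
  have *: "i = j" if "\<beta> ^ i = \<beta> ^ j" "i < n" "j < n" "i \<le> j" for i j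
  proof -
    have "\<beta> ^ j = \<beta> ^ i * \<beta> ^ (j - i)" using \<open>i \<le> j\<close> by (simp flip: power_add)
    hence "\<beta> ^ (j - i) = 1" using that(1) beta_nz by simp
    hence "n dvd j - i" by (rule beta_pow_eq_1)
    moreover have "j - i < n" using that by simp
    ultimately have "j - i = 0" using dvd_imp_le by (metis neq0_conv not_less)
    thus ?thesis using \<open>i \<le> j\<close> by simp
  qed
  fix i j assume "i \<in> {..<n}" "j \<in> {..<n}" "\<beta> ^ i = \<beta> ^ j"
  thus "i = j" using *[of i j] *[of j i] by (cases "i \<le> j") auto
qed

lemma min_poly_exists:
  fixes x :: 'b
  shows "\<exists>p. lead_coeff p = 1 \<and> poly (map_poly e p) x = 0 \<and>
      (\<forall>r. poly (map_poly e r) x = 0 \<longrightarrow> p dvd r)"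
proof -
  define R where "R = {p. p \<noteq> 0 \<and> poly (map_poly e p) x = 0}"
  define r0 :: "'a poly" where "r0 = Polynomial.monom 1 NN - [:0,1:]"
  have "Polynomial.coeff [:0,1::'a:] NN = 0" using NN_ge n2 by (intro coeff_eq_0) simp
  hence "Polynomial.coeff r0 NN = 1" by (simp add: r0_def coeff_monom)
  hence "r0 \<noteq> 0" by auto
  moreover have "map_poly e r0 = Polynomial.monom 1 NN - [:0,1:]"
    by (simp add: r0_def map_poly_fe_diff[OF emb] map_poly_monom fe_0[OF emb] fe_1[OF emb]
        map_poly_pCons)
  moreover have "x ^ NN = x" unfolding NN_def by (rule fin_field_pow_card)
  ultimately have "r0 \<in> R" by (simp add: R_def poly_monom)
  define d where "d = (LEAST d. \<exists>p\<in>R. degree p = d)"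
  obtain p where p: "p \<in> R" "degree p = d"
    using LeastI_ex[of "\<lambda>d. \<exists>p\<in>R. degree p = d"] \<open>r0 \<in> R\<close> unfolding d_def by blast
  have dmin: "d \<le> degree p'" if "p' \<in> R" for p'
    unfolding d_def using that by (intro Least_le) auto
  define P where "P = Polynomial.smult (inverse (lead_coeff p)) p"
  have pnz: "p \<noteq> 0" using p by (simp add: R_def)
  have lcP: "lead_coeff P = 1" using pnz by (simp add: P_def lead_coeff_smult)
  have "degree P = degree p" using pnz by (simp add: P_def)
  hence degP: "degree P = d" using p by simp
  have rootP: "poly (map_poly e P) x = 0"
    using p by (simp add: P_def R_def map_poly_smult fe_0[OF emb] fe_mult[OF emb])
  have "P dvd r" if "poly (map_poly e r) x = 0" for r
  proof (rule ccontr)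
    assume nd: "\<not> P dvd r"
    have Pnz: "P \<noteq> 0" using lcP by auto
    have "r mod P \<noteq> 0" using nd by (simp add: mod_eq_0_iff_dvd)
    moreover have "degree (r mod P) < degree P" using Pnz nd by (rule degree_mod_less_degree)
    moreover have "r mod P = r - P * (r div P)" by (simp add: mod_div_mult_eq[symmetric] algebra_simps)
    hence "poly (map_poly e (r mod P)) x = 0"
      using that rootP by (simp add: map_poly_fe_diff[OF emb] map_poly_fe_mult[OF emb])
    ultimately show False using dmin[of "r mod P"] degP by (simp add: R_def)
  qed
  thus ?thesis using lcP rootP by blast
qed

lemma monic_normalize: "lead_coeff (p :: 'a poly) = 1 \<Longrightarrow> normalize p = p"
  by (simp add: normalize_poly_eq_map_poly)

lemma min_poly_spec:
  fixes x :: 'b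
  shows "lead_coeff (min_poly e x) = 1 \<and> poly (map_poly e (min_poly e x)) x = 0 \<and>
      (\<forall>r. poly (map_poly e r) x = 0 \<longrightarrow> min_poly e x dvd r)"
  unfolding min_poly_def
proof (rule theI')
  show "\<exists>!p. lead_coeff p = 1 \<and> poly (map_poly e p) x = 0 \<and>
      (\<forall>r. poly (map_poly e r) x = 0 \<longrightarrow> p dvd r)"
  proof (rule ex_ex1I)
    show "\<exists>p. lead_coeff p = 1 \<and> poly (map_poly e p) x = 0 \<and>
      (\<forall>r. poly (map_poly e r) x = 0 \<longrightarrow> p dvd r)" by (rule min_poly_exists)
  next
    fix p1 p2 assume a: "lead_coeff p1 = 1 \<and> poly (map_poly e p1) x = 0 \<and>
      (\<forall>r. poly (map_poly e r) x = 0 \<longrightarrow> p1 dvd r)"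
      "lead_coeff p2 = 1 \<and> poly (map_poly e p2) x = 0 \<and>
      (\<forall>r. poly (map_poly e r) x = 0 \<longrightarrow> p2 dvd r)"
    show "p1 = p2" by (rule associated_eqI) (use a monic_normalize in auto)
  qed
qed

end


lemma vander:
  fixes f y :: "nat \<Rightarrow> 'b::field"
  assumes fin: "finite S" and inj: "inj_on f S"
    and eqs: "\<forall>j < card S. (\<Sum>i\<in>S. y i * f i ^ j) = 0"
    and t: "t \<in> S"
  shows "y t = 0"
proof -
  define L where "L = (\<Prod>s\<in>S-{t}. [:- f s, 1:])"
  have degL: "degree L = card S - 1"
    unfolding L_def using fin t
    by (subst degree_prod_eq_sum_degree) auto
  have Lt: "poly L (f t) \<noteq> 0"
    unfolding L_def poly_prod using fin inj t
    by (subst prod_zero_iff) (auto simp: inj_on_def)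
  have Ls: "poly L (f s) = 0" if "s \<in> S - {t}" for s
    unfolding L_def poly_prod using fin that
    by (subst prod_zero_iff) auto
  have cpos: "card S > 0" using fin t card_gt_0_iff by blast
  have "0 = (\<Sum>j\<le>degree L. Polynomial.coeff L j * (\<Sum>i\<in>S. y i * f i ^ j))"
  proof (intro sum.neutral[symmetric] ballI)
    fix j assume "j \<in> {..degree L}"
    hence "j < card S" using degL cpos by auto
    thus "Polynomial.coeff L j * (\<Sum>i\<in>S. y i * f i ^ j) = 0" using eqs by simp
  qed
  also have "\<dots> = (\<Sum>i\<in>S. y i * (\<Sum>j\<le>degree L. Polynomial.coeff L j * f i ^ j))"
    by (simp add: sum_distrib_left sum_distrib_right mult_ac) (rule sum.swap)
  also have "\<dots> = (\<Sum>i\<in>S. y i * poly L (f i))" by (simp add: poly_altdef)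
  also have "\<dots> = y t * poly L (f t)"
    using fin t Ls by (intro sum.mono_neutral_right[of S "{t}", simplified]) auto
  finally show ?thesis using Lt by simp
qed

context bch begin

definition Zs :: "nat set \<Rightarrow> nat set" where
  "Zs I = {z. z < n \<and> (\<exists>i\<in>I. \<exists>t. [z = i * q ^ t] (mod n))}"

abbreviation mp where "mp i \<equiv> min_poly e (\<beta> ^ i)"

lemma Zs_fin: "finite (Zs I)" unfolding Zs_def by (rule finite_subset[of _ "{..<n}"]) auto

lemma Zs_sub: "Zs I \<subseteq> {..<n}" unfolding Zs_def by auto

lemma I_sub_Zs: "I \<subseteq> {..<n} \<Longrightarrow> I \<subseteq> Zs I"
  unfolding Zs_def by (force intro: exI[of _ 0])

lemma card_Sbeta: "card ((\<lambda>z. \<beta> ^ z) ` Zs I) = card (Zs I)"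
  by (rule card_image) (rule inj_on_subset[OF beta_inj Zs_sub])

lemma Zs_phi: assumes "z \<in> Zs I" shows "(z * q) mod n \<in> Zs I"
proof -
  obtain i t where "i \<in> I" "[z = i * q ^ t] (mod n)" using assms unfolding Zs_def by auto
  from \<open>[z = i * q ^ t] (mod n)\<close> have "[z * q = i * q ^ t * q] (mod n)" by (rule cong_scalar_right)
  hence "[(z * q) mod n = i * q ^ Suc t] (mod n)" by (simp add: cong_def mult_ac)
  moreover have "(z * q) mod n < n" using n2 by simp
  ultimately show ?thesis unfolding Zs_def using \<open>i \<in> I\<close> by blast
qed

lemma Lcm_roots:
  assumes "z \<in> Zs I"
  shows "poly (map_poly e (Lcm (mp ` I))) (\<beta> ^ z) = 0"
proof -
  obtain i t where it: "i \<in> I" "[z = i * q ^ t] (mod n)" using assms unfolding Zs_def by auto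
  have "mp i dvd Lcm (mp ` I)" using it by (intro dvd_Lcm) auto
  then obtain k where k: "Lcm (mp ` I) = mp i * k" by (auto elim!: dvdE)
  have "poly (map_poly e (mp i)) (\<beta> ^ i) = 0" using min_poly_spec by blast
  hence "poly (map_poly e (Lcm (mp ` I))) (\<beta> ^ i) = 0"
    by (simp add: k map_poly_fe_mult[OF emb])
  hence "poly (map_poly e (Lcm (mp ` I))) ((\<beta> ^ i) ^ (q ^ t)) = 0" by (rule root_phi_iter)
  moreover have "(\<beta> ^ i) ^ (q ^ t) = \<beta> ^ z"
    using beta_cong[of "i * q ^ t" z] it(2) by (simp add: power_mult cong_sym)
  ultimately show ?thesis by simp
qed

lemma Lcm_degree:
  assumes I: "I \<subseteq> {..<n}"
  shows "Lcm (mp ` I) \<noteq> 0 \<and> degree (Lcm (mp ` I)) = card (Zs I)"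
proof -
  define S where "S = (\<lambda>z. \<beta> ^ z) ` Zs I"
  define Q where "Q = (\<Prod>y\<in>S. [:- y, 1:])"
  have finS: "finite S" unfolding S_def using Zs_fin by simp
  have phiS: "phi ` S = S"
  proof (rule endo_inj_surj[OF finS])
    show "phi ` S \<subseteq> S"
    proof
      fix w assume "w \<in> phi ` S"
      then obtain z where z: "z \<in> Zs I" "w = phi (\<beta> ^ z)" unfolding S_def by auto
      have "phi (\<beta> ^ z) = \<beta> ^ ((z * q) mod n)"
        by (simp add: phi_def flip: power_mult beta_pow_mod)
      thus "w \<in> S" using z Zs_phi unfolding S_def by auto
    qed
    show "inj_on phi S" using fe_inj[OF phi_emb] by (rule inj_on_subset) simp
  qed
  have "map_poly phi Q = (\<Prod>y\<in>S. [:- phi y, 1:])"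
    unfolding Q_def
    by (simp add: map_poly_fe_prod[OF phi_emb] map_poly_pCons fe_0[OF phi_emb]
        fe_1[OF phi_emb] fe_uminus[OF phi_emb])
  also have "\<dots> = (\<Prod>y\<in>phi ` S. [:- y, 1:])"
    by (rule prod.reindex[symmetric, unfolded comp_def])
       (rule inj_on_subset[OF fe_inj[OF phi_emb]], simp)
  also have "\<dots> = Q" using phiS Q_def by simp
  finally have Qfix: "map_poly phi Q = Q" .
  define h where "h = map_poly (inv_into UNIV e) Q"
  have hQ: "map_poly e h = Q" unfolding h_def by (rule fixed_poly[OF Qfix])
  have Qnz: "Q \<noteq> 0" unfolding Q_def using finS by (subst prod_zero_iff) auto
  have degQ: "degree Q = card S" unfolding Q_def using finS
    by (subst degree_prod_eq_sum_degree) auto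
  have hnz: "h \<noteq> 0" using hQ Qnz by auto
  have degh: "degree h = card S" using degQ hQ degree_map_poly_fe[OF emb, of h] by simp
  have "mp i dvd h" if "i \<in> I" for i
  proof -
    have "\<beta> ^ i \<in> S" using I_sub_Zs[OF I] that unfolding S_def by auto
    hence "poly Q (\<beta> ^ i) = 0" unfolding Q_def poly_prod using finS
      by (subst prod_zero_iff) auto
    moreover have "\<forall>r. poly (map_poly e r) (\<beta> ^ i) = 0 \<longrightarrow> mp i dvd r"
      using min_poly_spec by blast
    ultimately show ?thesis using hQ by simp
  qed
  hence dvdh: "Lcm (mp ` I) dvd h" by (intro Lcm_least) auto
  hence gnz: "Lcm (mp ` I) \<noteq> 0" using hnz by auto
  have le1: "degree (Lcm (mp ` I)) \<le> card S"
    using dvd_imp_degree_le[OF dvdh hnz] degh by simp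
  have "S \<subseteq> {x. poly (map_poly e (Lcm (mp ` I))) x = 0}"
    unfolding S_def using Lcm_roots by auto
  hence "card S \<le> card {x. poly (map_poly e (Lcm (mp ` I))) x = 0}"
    by (intro card_mono) auto
  also have "\<dots> \<le> degree (map_poly e (Lcm (mp ` I)))"
    by (rule card_poly_roots_bound) (simp add: map_poly_fe_eq_0[OF emb] gnz)
  finally have "card S \<le> degree (Lcm (mp ` I))" by (simp add: degree_map_poly_fe[OF emb])
  with le1 gnz show ?thesis using card_Sbeta S_def by simp
qed

lemma bch_bound:
  assumes c: "c \<noteq> 0" "degree c < n"
    and roots: "\<forall>j < D - 1. poly (map_poly e c) (\<beta> ^ (b + j)) = 0"
  shows "D \<le> hweight c"
proof (rule ccontr)
  assume "\<not> D \<le> hweight c"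
  define S where "S = {i. Polynomial.coeff c i \<noteq> 0}"
  have Ssub: "S \<subseteq> {..degree c}" unfolding S_def using le_degree by auto
  have finS: "finite S" using Ssub finite_subset by blast
  have cardS: "card S < D" using \<open>\<not> D \<le> hweight c\<close> by (simp add: hweight_def S_def)
  obtain t where t: "t \<in> S" using c(1) unfolding S_def by (meson leading_coeff_neq_0 mem_Collect_eq)
  have injS: "inj_on (\<lambda>i. \<beta> ^ i) S"
    by (rule inj_on_subset[OF beta_inj]) (use Ssub c(2) in auto)
  have "\<forall>j < card S. (\<Sum>i\<in>S. (e (Polynomial.coeff c i) * \<beta> ^ (b * i)) * (\<beta> ^ i) ^ j) = 0"
  proof (intro allI impI)
    fix j assume "j < card S"
    hence "j < D - 1" using cardS by simp
    hence "0 = poly (map_poly e c) (\<beta> ^ (b + j))" using roots by simp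
    also have "\<dots> = (\<Sum>i\<le>degree c. e (Polynomial.coeff c i) * (\<beta> ^ (b + j)) ^ i)"
      by (simp add: poly_altdef degree_map_poly_fe[OF emb] coeff_map_poly fe_0[OF emb])
    also have "\<dots> = (\<Sum>i\<in>S. e (Polynomial.coeff c i) * (\<beta> ^ (b + j)) ^ i)"
      by (rule sum.mono_neutral_right) (use Ssub in \<open>auto simp: S_def fe_0[OF emb]\<close>)
    also have "\<dots> = (\<Sum>i\<in>S. (e (Polynomial.coeff c i) * \<beta> ^ (b * i)) * (\<beta> ^ i) ^ j)"
      by (intro sum.cong refl)
         (simp add: power_add power_mult_distrib mult_ac flip: power_mult)
    finally show "(\<Sum>i\<in>S. (e (Polynomial.coeff c i) * \<beta> ^ (b * i)) * (\<beta> ^ i) ^ j) = 0" by simp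
  qed
  from vander[OF finS injS this t] have "e (Polynomial.coeff c t) = 0" using beta_nz by simp
  thus False using t by (simp add: S_def fe_eq_0_iff[OF emb])
qed

definition Pm :: "nat \<Rightarrow> 'a poly set" where "Pm m = {p. \<forall>i\<ge>m. Polynomial.coeff p i = 0}"

lemma card_Pm: "card (Pm m) = q ^ m"
proof (induction m)
  case 0
  have "Pm 0 = {0}" unfolding Pm_def by (auto simp: poly_eq_iff)
  thus ?case by simp
next
  case (Suc m)
  have "Pm (Suc m) = (\<lambda>(a, p). pCons a p) ` (UNIV \<times> Pm m)"
  proof (rule Set.set_eqI, rule iffI)
    fix p assume "p \<in> Pm (Suc m)"
    obtain a p' where ap: "p = pCons a p'" by (cases p) auto
    have "p' \<in> Pm m" unfolding Pm_def
    proof (intro CollectI allI impI)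
      fix i assume "m \<le> i"
      hence "Polynomial.coeff p (Suc i) = 0" using \<open>p \<in> Pm (Suc m)\<close> unfolding Pm_def by simp
      thus "Polynomial.coeff p' i = 0" by (simp add: ap)
    qed
    thus "p \<in> (\<lambda>(a, p). pCons a p) ` (UNIV \<times> Pm m)" using ap by force
  next
    fix p assume "p \<in> (\<lambda>(a, p). pCons a p) ` (UNIV \<times> Pm m)"
    then obtain a p' where ap: "p = pCons a p'" "p' \<in> Pm m" by auto
    show "p \<in> Pm (Suc m)" unfolding Pm_def
    proof (intro CollectI allI impI)
      fix i assume "Suc m \<le> i"
      then obtain j where "i = Suc j" "m \<le> j" by (cases i) auto
      thus "Polynomial.coeff p i = 0" using ap unfolding Pm_def by simp
    qed
  qed
  moreover have "inj_on (\<lambda>(a, p). pCons a p) (UNIV \<times> Pm m)"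
    by (rule inj_onI) auto
  ultimately have "card (Pm (Suc m)) = card ((UNIV::'a set) \<times> Pm m)" by (simp add: card_image)
  also have "\<dots> = q * q ^ m" using Suc cardA by (simp add: card_cartesian_product)
  finally show ?case by simp
qed

lemma card_cyc:
  fixes g :: "'a poly"
  assumes g: "g \<noteq> 0" "degree g \<le> n"
  shows "card (cyclic_code n g) = q ^ (n - degree g)"
proof -
  have "cyclic_code n g = (\<lambda>h. g * h) ` Pm (n - degree g)"
  proof (rule Set.set_eqI, rule iffI)
    fix c assume "c \<in> cyclic_code n g"
    hence c: "degree c < n" "g dvd c" by (simp_all add: cyclic_code_def)
    from c(2) obtain h where h: "c = g * h" by (erule dvdE)
    have "h \<in> Pm (n - degree g)"
    proof (cases "h = 0")
      case False
      hence "degree g + degree h < n" using h g c(1) by (simp add: degree_mult_eq)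
      show ?thesis unfolding Pm_def
      proof (intro CollectI allI impI)
        fix i assume "n - degree g \<le> i"
        hence "degree h < i" using \<open>degree g + degree h < n\<close> by linarith
        thus "Polynomial.coeff h i = 0" by (rule coeff_eq_0)
      qed
    qed (simp add: Pm_def)
    thus "c \<in> (\<lambda>h. g * h) ` Pm (n - degree g)" using h by blast
  next
    fix c assume "c \<in> (\<lambda>h. g * h) ` Pm (n - degree g)"
    then obtain h where h: "c = g * h" "h \<in> Pm (n - degree g)" by blast
    have "degree c < n"
    proof (cases "h = 0")
      case True thus ?thesis using h n2 by simp
    next
      case False
      have "degree h < n - degree g"
      proof (rule ccontr)
        assume "\<not> degree h < n - degree g"
        hence "Polynomial.coeff h (degree h) = 0" using h(2) unfolding Pm_def by simp
        thus False using False by simp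
      qed
      thus ?thesis using h g False by (simp add: degree_mult_eq)
    qed
    thus "c \<in> cyclic_code n g" using h unfolding cyclic_code_def by simp
  qed
  moreover have "inj_on (\<lambda>h. g * h) (Pm (n - degree g))"
    by (rule inj_onI) (simp add: g)
  ultimately show ?thesis by (simp add: card_image card_Pm)
qed

end


lemma dvd_small_int: "(N::int) dvd x \<Longrightarrow> \<bar>x\<bar> < N \<Longrightarrow> x = 0"
  using dvd_imp_le_int[of x N] by fastforce

locale qn =
  fixes Q R N :: int
  assumes QR: "Q = 2*R+1" and R1: "R \<ge> 1" and NQ: "2*N = Q^3+1"
begin

lemma N_eq: "N = Q^2*R + Q*R + R + 1"
proof -
  have "2*N = 2*(Q^2*R + Q*R + R + 1)" using NQ QR
    by (simp add: power2_eq_square power3_eq_cube algebra_simps)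
  thus ?thesis by simp
qed

lemma Ndvd: "N dvd Q^3+1" unfolding NQ[symmetric] by simp

lemma Q3: "Q \<ge> 3" using QR R1 by simp


lemma Q2R_ge: "Q*R \<le> Q^2*R"
  using Q3 R1 by (simp add: power2_eq_square mult_right_mono)

definition good :: "int \<Rightarrow> bool" where "good a \<longleftrightarrow> 1 \<le> a \<and> a \<le> Q*R \<and> \<not> Q dvd a"

lemma good_Q: "good a \<Longrightarrow> a * Q \<le> Q^2*R"
  unfolding good_def using Q3 by (simp add: power2_eq_square mult_right_mono mult_ac)

lemma sum_lt: "good a \<Longrightarrow> good b \<Longrightarrow> a + b * Q < N"
  using good_Q[of b] N_eq R1 unfolding good_def by linarith

lemma sum_lt2: "good a \<Longrightarrow> good b \<Longrightarrow> a + b < N"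
  using sum_lt[of a b] Q3 unfolding good_def by (smt (verit) mult_le_cancel_left1)

lemma a_lt: "good a \<Longrightarrow> a < N" using sum_lt2[of a a] unfolding good_def by simp

lemma aQ_lt: "good a \<Longrightarrow> a * Q < N" using sum_lt[of a a] unfolding good_def by simp

lemma inj_core:
  assumes a: "good a" "good b" and s: "s < 6" and d: "N dvd a * Q^s - b"
  shows "s = 0 \<and> a = b"
proof -
  have Npos: "N > 0" using a_lt[OF a(1)] a(1) unfolding good_def by simp
  have b1: "1 \<le> a" "1 \<le> b" using a unfolding good_def by auto
  have "s = 0 \<or> s = 1 \<or> s = 2 \<or> s = 3 \<or> s = 4 \<or> s = 5" using s by auto
  thus ?thesis
  proof (elim disjE)
    assume "s = 0"
    hence "a - b = 0" using d a_lt[OF a(1)] a_lt[OF a(2)] b1 by (intro dvd_small_int[of N]) auto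
    thus ?thesis using \<open>s = 0\<close> by simp
  next
    assume "s = 1"
    have "a * Q > 0" using b1 Q3 by simp
    hence "\<bar>a * Q - b\<bar> < N" unfolding abs_less_iff using aQ_lt[OF a(1)] a_lt[OF a(2)] b1 by linarith
    hence "a * Q - b = 0" using d \<open>s = 1\<close> by (intro dvd_small_int[of N]) auto
    hence "Q dvd b" by (metis dvd_triv_right eq_iff_diff_eq_0)
    thus ?thesis using a(2) unfolding good_def by simp
  next
    assume "s = 2"
    have "a + b * Q = a * (Q^3 + 1) - Q * (a * Q^2 - b)" by (simp add: algebra_simps power2_eq_square power3_eq_cube)
    moreover have "N dvd a * (Q^3+1)" by (rule dvd_mult[OF Ndvd])
    moreover have "N dvd Q * (a * Q^2 - b)" using d \<open>s = 2\<close> by simp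
    ultimately have "N dvd a + b * Q" by (metis dvd_diff)
    hence "a + b * Q = 0" using sum_lt[OF a] b1 Q3 by (intro dvd_small_int[of N]) auto
    thus ?thesis using b1 Q3 by (smt (verit) mult_pos_pos)
  next
    assume "s = 3"
    have "a + b = a * (Q^3 + 1) - (a * Q^3 - b)" by (simp add: algebra_simps)
    moreover have "N dvd a * (Q^3+1)" by (rule dvd_mult[OF Ndvd])
    moreover have "N dvd (a * Q^3 - b)" using d \<open>s = 3\<close> by simp
    ultimately have "N dvd a + b" by (metis dvd_diff)
    hence "a + b = 0" using sum_lt2[OF a] b1 by (intro dvd_small_int[of N]) auto
    thus ?thesis using b1 by simp
  next
    assume "s = 4"
    have "b + a * Q = a * Q * (Q^3 + 1) - (a * Q^4 - b)" by (simp add: algebra_simps power3_eq_cube power4_eq_xxxx)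
    moreover have "N dvd a * Q * (Q^3+1)" by (rule dvd_mult[OF Ndvd])
    moreover have "N dvd (a * Q^4 - b)" using d \<open>s = 4\<close> by simp
    ultimately have "N dvd b + a * Q" by (metis dvd_diff)
    hence "b + a * Q = 0" using sum_lt[OF a(2) a(1)] b1 Q3 by (intro dvd_small_int[of N]) auto
    thus ?thesis using b1 Q3 by (smt (verit) mult_pos_pos)
  next
    assume "s = 5"
    have "a - b * Q = Q * (a * Q^5 - b) - a * (Q^3 - 1) * (Q^3 + 1)"
      by (simp add: algebra_simps power3_eq_cube power_numeral_reduce)
    moreover have "N dvd a * (Q^3 - 1) * (Q^3+1)" by (rule dvd_mult[OF Ndvd])
    moreover have "N dvd Q * (a * Q^5 - b)" using d \<open>s = 5\<close> by simp
    ultimately have "N dvd a - b * Q" by (metis dvd_diff)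
    moreover have "b * Q > 0" using b1 Q3 by simp
    hence "\<bar>a - b * Q\<bar> < N" unfolding abs_less_iff using aQ_lt[OF a(2)] a_lt[OF a(1)] b1 by linarith
    ultimately have "a - b * Q = 0" by (intro dvd_small_int[of N])
    hence "Q dvd a" by (metis dvd_triv_right eq_iff_diff_eq_0)
    thus ?thesis using a(1) unfolding good_def by simp
  qed
qed

end

locale qn_nat =
  fixes q n :: nat
  assumes oddq: "odd q" and q3: "q \<ge> 3" and nq: "2*n = q^3+1"
begin

definition r where "r = (q - 1) div 2"

lemma q_r: "q = 2*r+1" unfolding r_def using oddq by (auto elim!: oddE)

lemma r1: "r \<ge> 1" using q_r q3 by simp

sublocale I: qn "int q" "int r" "int n"
proof
  show "int q = 2 * int r + 1" using q_r by simp
  show "1 \<le> int r" using r1 by simp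
  show "2 * int n = int q ^ 3 + 1" using arg_cong[OF nq, of int] by simp
qed

lemma n_eq: "n = q*q*r + q*r + r + 1"
proof -
  have "int n = int (q*q*r + q*r + r + 1)" using I.N_eq by (simp add: power2_eq_square)
  thus ?thesis by (simp only: of_nat_eq_iff)
qed

definition goodn :: "nat \<Rightarrow> bool" where "goodn a \<longleftrightarrow> 1 \<le> a \<and> a \<le> q*r \<and> \<not> q dvd a"

lemma goodn_int: "goodn a \<longleftrightarrow> I.good (int a)"
  unfolding goodn_def I.good_def by (simp add: int_dvd_int_iff flip: of_nat_mult)

lemma coprime_qn: "coprime q n"
proof (rule coprimeI)
  fix d assume d: "d dvd q" "d dvd n"
  have "q dvd q^3" by (simp add: power3_eq_cube)
  hence "d dvd q^3" using d(1) by (rule dvd_trans[rotated])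
  moreover have "d dvd q^3 + 1" using d(2) nq by (metis dvd_mult)
  ultimately have "d dvd 1" using dvd_add_right_iff by blast
  thus "is_unit d" by simp
qed

lemma q6: "[q^6 = 1] (mod n)"
proof -
  have "int q ^ 6 - 1 = (int q^3 + 1) * (int q^3 - 1)" by (simp add: algebra_simps flip: power_add)
  hence "int n dvd int q ^ 6 - 1" using I.Ndvd by simp
  hence "[int (q^6) = int 1] (mod int n)" by (simp add: cong_iff_dvd_diff)
  thus ?thesis by (simp only: cong_int_iff)
qed

lemma pow_mod6: "[x * q ^ t = x * q ^ (t mod 6)] (mod n)"
proof -
  have "q ^ t = (q^6) ^ (t div 6) * q ^ (t mod 6)"
    by (simp flip: power_mult power_add)
  moreover have "[(q^6) ^ (t div 6) * q ^ (t mod 6) = 1 ^ (t div 6) * q ^ (t mod 6)] (mod n)"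
    by (intro cong_mult cong_pow q6 cong_refl)
  ultimately show ?thesis by (simp add: cong_scalar_left)
qed

lemma inj_aux:
  assumes "goodn a" "goodn b" "t < 6" "t' \<le> t" "[a * q ^ t = b * q ^ t'] (mod n)"
  shows "a = b \<and> t = t'"
proof -
  define s where "s = t - t'"
  have "[q ^ t' * (a * q ^ s) = q ^ t' * b] (mod n)"
    using assms(5) assms(4) by (simp add: s_def mult_ac flip: power_add)
  hence "[a * q ^ s = b] (mod n)"
    using coprime_qn by (subst (asm) cong_mult_lcancel_nat) (simp_all add: coprime_power_left_iff)
  hence "[int (a * q ^ s) = int b] (mod int n)" by (simp only: cong_int_iff)
  hence "int n dvd int a * int q ^ s - int b" by (simp add: cong_iff_dvd_diff)
  moreover have "s < 6" using assms by (simp add: s_def)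
  ultimately have "s = 0 \<and> int a = int b"
    using I.inj_core assms(1,2) goodn_int by blast
  thus ?thesis using assms(4) by (simp add: s_def)
qed

lemma inj_n:
  assumes "goodn a" "goodn b" "t < 6" "t' < 6" "[a * q ^ t = b * q ^ t'] (mod n)"
  shows "a = b \<and> t = t'"
proof (cases "t' \<le> t")
  case True thus ?thesis using inj_aux assms by blast
next
  case False thus ?thesis using inj_aux[of b a t' t] assms by (simp add: cong_sym_eq)
qed

definition H where "H = (q^2 - 1) div 2"

lemma H_eq: "H = q*r + r"
proof -
  have "q*q = q*(2*r+1)" by (subst (2) q_r) simp
  hence "q^2 = 2 * (q*r + r) + 1" using q_r by (simp add: power2_eq_square algebra_simps)
  hence "q^2 - 1 = 2 * (q*r + r)" by simp
  thus ?thesis unfolding H_def by simp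
qed

lemma H_lt: "H < n" using H_eq n_eq by linarith

lemma cover:
  assumes "1 \<le> i" "i \<le> H"
  shows "\<exists>a t. goodn a \<and> a \<le> i \<and> [i = a * q ^ t] (mod n)"
  using assms
proof (induction i rule: less_induct)
  case (less i)
  show ?case
  proof (cases "q dvd i")
    case True
    then obtain j where j: "i = q * j" by (auto elim!: dvdE)
    have "1 \<le> j" "j < i" using less.prems j q3 by (auto simp: Suc_le_eq)
    then obtain a t where at: "goodn a" "a \<le> j" "[j = a * q ^ t] (mod n)"
      using less.IH[of j] less.prems by auto
    have "[i = q * (a * q ^ t)] (mod n)" using j at(3) by (simp add: cong_scalar_left)
    hence "[i = a * q ^ Suc t] (mod n)" by (simp add: mult_ac)
    thus ?thesis using at \<open>j < i\<close> by (intro exI[of _ a] exI[of _ "Suc t"]) auto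
  next
    case nd: False
    show ?thesis
    proof (cases "i \<le> q * r")
      case True
      thus ?thesis using nd less.prems unfolding goodn_def by (intro exI[of _ i] exI[of _ 0]) auto
    next
      case False
      define s where "s = i - q * r"
      have s: "1 \<le> s" "s \<le> r" "i = q * r + s" using False less.prems H_eq by (auto simp: s_def)
      have iq: "i * q = q*q*r + q*s" using s by (simp add: algebra_simps)
      have sq1: "q \<le> q * s" "q * s \<le> q * r" using s by simp_all
      define j where "j = n - i * q"
      have "i * q \<le> n" using iq n_eq sq1 by linarith
      hence j_eq: "j + i * q = n" by (simp add: j_def)
      have "1 \<le> j" "j < i" using j_eq iq n_eq sq1 q_r s by linarith+
      then obtain a t where at: "goodn a" "a \<le> j" "[j = a * q ^ t] (mod n)"
        using less.IH[of j] less.prems by auto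
      have jn: "int j = int n - int i * int q" using arg_cong[OF j_eq, of int] by simp
      have "int j * int q ^ 2 - int i = int n * (int q ^ 2 - 2 * int i) - int i * (int q ^ 3 + 1 - 2 * int n)"
        unfolding jn by (simp add: algebra_simps power2_eq_square power3_eq_cube)
      hence "int j * int q ^ 2 - int i = int n * (int q ^ 2 - 2 * int i)" using I.NQ by simp
      hence "[int (j * q^2) = int i] (mod int n)" by (simp add: cong_iff_dvd_diff)
      hence "[i = j * q^2] (mod n)" by (simp only: cong_int_iff cong_sym_eq)
      moreover have "[j * q^2 = a * q ^ t * q^2] (mod n)" using at(3) by (rule cong_scalar_right)
      ultimately have "[i = a * q ^ t * q^2] (mod n)" by (rule cong_trans)
      moreover have "a * q ^ t * q^2 = a * q ^ (t + 2)" by (simp only: power_add mult.assoc)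
      ultimately have "[i = a * q ^ (t + 2)] (mod n)" by simp
      thus ?thesis using at \<open>j < i\<close> by (intro exI[of _ a] exI[of _ "t+2"]) auto
    qed
  qed
qed

end


locale bchq = bch e \<alpha> q n + qn_nat q n
  for e :: "'a::{field_gcd,finite} \<Rightarrow> 'b::{field,finite}" and \<alpha> :: 'b and q n :: nat
begin

definition Am :: "nat \<Rightarrow> nat set" where "Am m = {a. goodn a \<and> a \<le> m}"

lemma n_pos: "n > 0" using n2 by simp

lemma Zs_char:
  assumes m: "m \<le> H"
  shows "Zs {1..m} = (\<lambda>(a,t). a * q ^ t mod n) ` (Am m \<times> {..<6})"
proof (rule Set.set_eqI, rule iffI)
  fix z assume "z \<in> Zs {1..m}"
  then obtain i t where z: "z < n" "i \<in> {1..m}" "[z = i * q ^ t] (mod n)" unfolding Zs_def by auto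
  obtain a t0 where a: "goodn a" "a \<le> i" "[i = a * q ^ t0] (mod n)"
    using cover[of i] z(2) m by auto
  have "[i * q ^ t = a * q ^ t0 * q ^ t] (mod n)" using a(3) by (rule cong_scalar_right)
  hence "[z = a * q ^ (t0 + t)] (mod n)" using z(3) by (simp add: power_add mult.assoc cong_trans)
  hence "[z = a * q ^ ((t0 + t) mod 6)] (mod n)" using pow_mod6 cong_trans by blast
  hence "z = a * q ^ ((t0 + t) mod 6) mod n" using z(1) by (simp add: cong_def)
  moreover have "a \<in> Am m" using a z(2) by (simp add: Am_def)
  ultimately show "z \<in> (\<lambda>(a,t). a * q ^ t mod n) ` (Am m \<times> {..<6})" by force
next
  fix z assume "z \<in> (\<lambda>(a,t). a * q ^ t mod n) ` (Am m \<times> {..<6})"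
  then obtain a t where at: "a \<in> Am m" "z = a * q ^ t mod n" by auto
  have "a \<in> {1..m}" using at(1) by (simp add: Am_def goodn_def)
  moreover have "[z = a * q ^ t] (mod n)" using at(2) by (simp add: cong_def)
  moreover have "z < n" using at(2) n_pos by simp
  ultimately show "z \<in> Zs {1..m}" unfolding Zs_def by blast
qed

lemma card_Zs1:
  assumes m: "m \<le> H"
  shows "card (Zs {1..m}) = 6 * card (Am m)"
proof -
  have "inj_on (\<lambda>(a,t). a * q ^ t mod n) (Am m \<times> {..<6})"
  proof (rule inj_onI, clarify)
    fix a t b t' assume h: "a \<in> Am m" "t < 6" "b \<in> Am m" "t' < 6" "a * q ^ t mod n = b * q ^ t' mod n"
    hence "[a * q ^ t = b * q ^ t'] (mod n)" by (simp add: cong_def)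
    thus "a = b \<and> t = t'" using inj_n h by (auto simp: Am_def)
  qed
  moreover have "finite (Am m)" unfolding Am_def by (rule finite_subset[of _ "{..m}"]) auto
  ultimately show ?thesis using Zs_char[OF m] by (simp add: card_image card_cartesian_product)
qed

lemma zero_notin: assumes m: "m \<le> H" shows "0 \<notin> Zs {1..m}"
proof
  assume "0 \<in> Zs {1..m}"
  then obtain i t where i: "i \<in> {1..m}" "[0 = i * q ^ t] (mod n)" unfolding Zs_def by auto
  hence "n dvd i * q ^ t" by (simp add: cong_def dvd_eq_mod_eq_0)
  moreover have "coprime n (q ^ t)" using coprime_qn by (simp add: coprime_commute)
  ultimately have "n dvd i" using coprime_dvd_mult_left_iff by blast
  thus False using i(1) m H_lt by (auto dest: dvd_imp_le)
qed

lemma Zs0: "Zs {0..m} = insert 0 (Zs {1..m})"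
proof (rule Set.set_eqI, rule iffI)
  fix z assume "z \<in> Zs {0..m}"
  then obtain i t where z: "z < n" "i \<in> {0..m}" "[z = i * q ^ t] (mod n)" unfolding Zs_def by auto
  show "z \<in> insert 0 (Zs {1..m})"
  proof (cases "i = 0")
    case True
    hence "z = 0" using z by (simp add: cong_def)
    thus ?thesis by simp
  next
    case False
    hence "i \<in> {1..m}" using z(2) by auto
    hence "z \<in> Zs {1..m}" unfolding Zs_def using z(1,3) by blast
    thus ?thesis by simp
  qed
next
  fix z assume "z \<in> insert 0 (Zs {1..m})"
  show "z \<in> Zs {0..m}"
  proof (cases "z = 0")
    case True
    have "[0 = 0 * q ^ 0] (mod n)" by simp
    moreover have "(0::nat) \<in> {0..m}" by simp
    ultimately show ?thesis unfolding Zs_def using n_pos True by blast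
  next
    case False
    hence "z \<in> Zs {1..m}" using \<open>z \<in> insert 0 (Zs {1..m})\<close> by simp
    thus ?thesis unfolding Zs_def by auto
  qed
qed

lemma card_Am: "card (Am m) = min m (q*r) - min m (q*r) div q"
proof -
  define M where "M = min m (q*r)"
  have A: "Am m = {1..M} - {a\<in>{1..M}. q dvd a}"
    unfolding Am_def goodn_def M_def by auto
  have B: "{a\<in>{1..M}. q dvd a} = (\<lambda>j. q * j) ` {1..M div q}"
  proof (rule Set.set_eqI, rule iffI)
    fix a assume "a \<in> {a\<in>{1..M}. q dvd a}"
    hence a1: "1 \<le> a" "a \<le> M" "q dvd a" by auto
    from a1(3) obtain j where j: "a = q * j" by (erule dvdE)
    hence "a = q * j" "1 \<le> q * j" "q * j \<le> M" using a1 by auto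
    moreover hence "1 \<le> j" "j \<le> M div q" using q3 by (auto simp: less_eq_div_iff_mult_less_eq mult.commute)
    ultimately show "a \<in> (\<lambda>j. q * j) ` {1..M div q}" by auto
  next
    fix a assume "a \<in> (\<lambda>j. q * j) ` {1..M div q}"
    then obtain j where "j \<in> {1..M div q}" "a = q * j" by blast
    hence "a = q * j" "1 \<le> j" "j \<le> M div q" by auto
    moreover hence "q * j \<le> M" using q3 by (auto simp: less_eq_div_iff_mult_less_eq mult.commute)
    moreover have "1 \<le> q * j" using \<open>1 \<le> j\<close> q3 by simp
    ultimately show "a \<in> {a\<in>{1..M}. q dvd a}" by auto
  qed
  have "card {a\<in>{1..M}. q dvd a} = M div q"
    unfolding B using q3 by (subst card_image) (auto simp: inj_on_def)
  thus ?thesis unfolding A by (subst card_Diff_subset) (auto simp: M_def)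
qed

end


context bchq begin

lemma k_formula:
  fixes \<delta> :: nat and \<epsilon> k :: int
  assumes d: "1 \<le> \<delta> - 1" "\<delta> - 1 \<le> (q^2-1) div 2"
    and eps: "\<epsilon> = \<lceil>real (\<delta> - 1) * (1 - 1 / real q)\<rceil>"
    and kdef: "k = (if 2 \<le> \<delta> \<and> \<delta> \<le> (q^2 - 1) div 2 - (q - 3) div 2 then int n - 6 * \<epsilon>
              else int n - 6 * \<epsilon> + 6 * (int \<delta> - int ((q^2 - 1) div 2) + \<lfloor>(real q - 2) / 2\<rfloor>))"
  shows "k = int n - 6 * int (card (Am (\<delta>-1))) \<and> k \<ge> 1"
proof -
  define m where "m = \<delta> - 1"
  have m1: "1 \<le> m" "m \<le> H" "\<delta> = m + 1" using d by (auto simp: m_def H_def)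
  have qpos: "real q > 0" using q3 by simp
  have "real m * (1 - 1 / real q) = - (real m / real q) + of_int (int m)"
    using qpos by (simp add: field_simps)
  hence "\<epsilon> = \<lceil>- (real m / real q)\<rceil> + int m" unfolding eps m_def[symmetric]
    by (simp only: ceiling_add_of_int)
  also have "\<lceil>- (real m / real q)\<rceil> = - int (m div q)"
    by (simp only: ceiling_minus floor_divide_of_nat_eq)
  finally have eps2: "\<epsilon> = int m - int (m div q)" by simp
  have fl: "\<lfloor>(real q - 2) / 2\<rfloor> = int r - 1"
  proof (rule floor_unique)
    show "real_of_int (int r - 1) \<le> (real q - 2) / 2" using q_r by simp
    show "(real q - 2) / 2 < real_of_int (int r - 1) + 1" using q_r by simp
  qed
  have q3r: "(q - 3) div 2 = r - 1" using q_r by simp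
  have cond: "(2 \<le> \<delta> \<and> \<delta> \<le> (q^2 - 1) div 2 - (q - 3) div 2) \<longleftrightarrow> m \<le> q * r"
    unfolding H_def[symmetric] H_eq q3r using m1 r1 by auto
  have cA: "card (Am m) = min m (q*r) - min m (q*r) div q" by (rule card_Am)
  have qrq: "q * r div q = r" using q3 by simp
  have cAmax: "card (Am m) \<le> q * r - r"
  proof -
    have "Am m \<subseteq> Am (q*r)" unfolding Am_def goodn_def by auto
    hence "card (Am m) \<le> card (Am (q*r))"
      by (intro card_mono) (auto simp: Am_def intro: finite_subset[of _ "{..q*r}"])
    also have "\<dots> = q * r - r" using card_Am[of "q*r"] qrq by simp
    finally show ?thesis .
  qed
  have keq: "k = int n - 6 * int (card (Am m))"
  proof (cases "m \<le> q * r")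
    case True
    hence "card (Am m) = m - m div q" using cA by simp
    moreover have "m div q \<le> m" by simp
    ultimately have "int (card (Am m)) = int m - int (m div q)" by simp
    thus ?thesis using kdef cond True eps2 by simp
  next
    case False
    hence "card (Am m) = q * r - r" using cA qrq by simp
    moreover have "r \<le> q * r" using q3 by simp
    ultimately have c: "int (card (Am m)) = int (q * r) - int r" by simp
    have "r \<le> m div q" using False q3 by (simp add: less_eq_div_iff_mult_less_eq mult.commute)
    moreover have "m div q < r + 1" using m1 H_eq q_r
      by (simp add: div_less_iff_less_mult algebra_simps)
    ultimately have "m div q = r" by simp
    hence "\<epsilon> = int m - int r" using eps2 by simp
    moreover have "int ((q^2 - 1) div 2) = int (q * r) + int r" using H_eq unfolding H_def by simp
    ultimately show ?thesis using kdef cond False fl c m1(3) by simp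
  qed
  have "6 * (q * r - r) < n"
  proof (cases "r = 1")
    case True
    hence "q = 3" using q_r by simp
    thus ?thesis using n_eq True by simp
  next
    case False
    hence "q \<ge> 5" using q_r r1 by simp
    hence "5 * (q * r) \<le> q * (q * r)" by (intro mult_right_mono) auto
    hence h1: "5 * (q * r) \<le> q * q * r" by (simp add: mult.assoc)
    have h2: "6 * (q * r - r) \<le> 6 * (q * r)" by simp
    show ?thesis using n_eq h1 h2 by linarith
  qed
  hence "6 * card (Am m) < n" using cAmax by linarith
  thus ?thesis using keq m_def by simp
qed

end


context bchq begin

lemma code_roots:
  assumes "c \<in> cyclic_code n (Lcm (mp ` I))" "z \<in> Zs I"
  shows "poly (map_poly e c) (\<beta> ^ z) = 0"
proof -
  have "Lcm (mp ` I) dvd c" using assms(1) by (simp add: cyclic_code_def)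
  then obtain k where k: "c = Lcm (mp ` I) * k" by (erule dvdE)
  show ?thesis using Lcm_roots[OF assms(2)] by (simp add: k map_poly_fe_mult[OF emb])
qed

lemma second_roots:
  assumes m: "m \<le> H" and j: "j < 2*m + 1"
  shows "\<exists>z\<in>Zs {0..m}. \<beta> ^ (n - m + j) = \<beta> ^ z"
proof (cases "m \<le> j")
  case True
  have mn: "m < n" using m H_lt by simp
  have "n - m + j = n + (j - m)" using True mn by simp
  hence "\<beta> ^ (n - m + j) = \<beta> ^ (j - m)" by (simp add: power_add beta_pow_n)
  moreover have "{0..m} \<subseteq> Zs {0..m}" using mn by (intro I_sub_Zs) auto
  hence "j - m \<in> Zs {0..m}" using j by auto
  ultimately show ?thesis by blast
next
  case False
  define i where "i = m - j"
  have mn: "m < n" using m H_lt by simp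
  have i: "1 \<le> i" "i \<le> m" using False by (auto simp: i_def)
  define x where "x = n - i"
  have x: "x < n" "n - m + j = x" using i mn False by (auto simp: x_def i_def)
  have "int x - int (i * q^3) = int n * (1 - 2 * int i) + int i * (2 * int n - (int q^3 + 1))"
    using i mn by (simp add: x_def of_nat_diff algebra_simps)
  hence "int x - int (i * q^3) = int n * (1 - 2 * int i)" using I.NQ by simp
  hence "[int x = int (i * q^3)] (mod int n)" by (simp add: cong_iff_dvd_diff)
  hence "[x = i * q^3] (mod n)" by (simp only: cong_int_iff)
  hence "x \<in> Zs {0..m}" unfolding Zs_def using x(1) i by auto
  thus ?thesis using x(2) by auto
qed

end

theorem theorem5:
  fixes e :: "'a::{field_gcd,finite} \<Rightarrow> 'b::{field,finite}"
    and \<alpha> :: 'b and q n \<delta> :: nat and \<epsilon> k :: int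
  assumes "card (UNIV :: 'a set) = q" and "odd q"
    and "n = (q ^ 3 + 1) div 2"
    and "card (UNIV :: 'b set) = q ^ ord n q"
    and "field_emb e"
    and "\<forall>y::'b. y \<noteq> 0 \<longrightarrow> (\<exists>j::nat. y = \<alpha> ^ j)"
    and "1 \<le> \<delta> - 1" and "\<delta> - 1 \<le> (q^2 - 1) div 2"
    and "\<epsilon> = \<lceil>real (\<delta> - 1) * (1 - 1 / real q)\<rceil>"
    and "k = (if 2 \<le> \<delta> \<and> \<delta> \<le> (q^2 - 1) div 2 - (q - 3) div 2 then int n - 6 * \<epsilon>
              else int n - 6 * \<epsilon> + 6 * (int \<delta> - int ((q^2 - 1) div 2) + \<lfloor>(real q - 2) / 2\<rfloor>))"
  shows "code_params (bch_code e \<alpha> n \<delta> 1) n (nat k) \<delta>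
       \<and> code_params (bch_code e \<alpha> n (\<delta> + 1) 0) n (nat (k - 1)) (2 * \<delta>)"
proof -
  note A = assms
  have "q \<ge> 2" using fin_field_card_ge2[where 'b='a] A(1) by simp
  hence q3: "q \<ge> 3" using A(2) by (cases "q = 2") auto
  have "odd (q^3)" using A(2) by simp
  hence "even (q^3 + 1)" by simp
  hence nq: "2 * n = q^3 + 1" unfolding A(3) by (rule dvd_mult_div_cancel)
  have qnn: "qn_nat q n" by (rule qn_nat.intro) (use A(2) q3 nq in auto)
  have n2: "n \<ge> 2" using qn_nat.n_eq[OF qnn] qn_nat.r1[OF qnn] by simp
  have copr: "coprime n q" using qn_nat.coprime_qn[OF qnn] by (simp add: coprime_commute)
  have "[q ^ ord n q = 1] (mod n)" using ord_works by blast
  hence "n dvd q ^ ord n q - 1" by (rule cong_to_1_nat)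
  hence ndvd: "n dvd card (UNIV :: 'b set) - 1" using A(4) by simp
  have bb: "bch e \<alpha> q n" by (rule bch.intro) (use A(1,5,6) ndvd n2 in auto)
  interpret B: bchq e \<alpha> q n using bb qnn by (simp add: bchq_def)
  define m where "m = \<delta> - 1"
  have m: "1 \<le> m" "m \<le> B.H" "\<delta> = m + 1" using A(7,8) by (auto simp: m_def B.H_def)
  have mn: "m < n" using m B.H_lt by simp
  have gen1: "bch_gen e \<alpha> n \<delta> 1 = Lcm (B.mp ` {1..m})"
    unfolding bch_gen_def Let_def B.\<beta>_def B.NN_def using m by simp
  have gen0: "bch_gen e \<alpha> n (\<delta>+1) 0 = Lcm (B.mp ` {0..m})"
    unfolding bch_gen_def Let_def B.\<beta>_def B.NN_def using m by simp
  have kf: "k = int n - 6 * int (card (B.Am m)) \<and> k \<ge> 1"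
    using B.k_formula[OF A(7,8,9,10)] m_def by simp
  have c1: "card (B.Zs {1..m}) = 6 * card (B.Am m)" using B.card_Zs1 m by simp
  have c0: "card (B.Zs {0..m}) = 6 * card (B.Am m) + 1"
    using c1 B.Zs0[of m] B.zero_notin[of m] m B.Zs_fin[of "{1..m}"] by simp
  have d1: "Lcm (B.mp ` {1..m}) \<noteq> 0 \<and> degree (Lcm (B.mp ` {1..m})) = card (B.Zs {1..m})"
    by (rule B.Lcm_degree) (use mn in auto)
  have d0: "Lcm (B.mp ` {0..m}) \<noteq> 0 \<and> degree (Lcm (B.mp ` {0..m})) = card (B.Zs {0..m})"
    by (rule B.Lcm_degree) (use mn in auto)
  have le1: "degree (Lcm (B.mp ` {1..m})) \<le> n" using d1 c1 kf by linarith
  have le0: "degree (Lcm (B.mp ` {0..m})) \<le> n" using d0 c0 kf by linarith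
  have card1: "card (bch_code e \<alpha> n \<delta> 1) = card (UNIV :: 'a set) ^ nat k"
  proof -
    have "card (bch_code e \<alpha> n \<delta> 1) = q ^ (n - degree (Lcm (B.mp ` {1..m})))"
      unfolding bch_code_def gen1 using d1 le1 by (intro B.card_cyc) auto
    moreover have "n - degree (Lcm (B.mp ` {1..m})) = nat k" using d1 c1 kf by linarith
    ultimately show ?thesis using A(1) by simp
  qed
  have card0: "card (bch_code e \<alpha> n (\<delta>+1) 0) = card (UNIV :: 'a set) ^ nat (k - 1)"
  proof -
    have "card (bch_code e \<alpha> n (\<delta>+1) 0) = q ^ (n - degree (Lcm (B.mp ` {0..m})))"
      unfolding bch_code_def gen0 using d0 le0 by (intro B.card_cyc) auto
    moreover have "n - degree (Lcm (B.mp ` {0..m})) = nat (k - 1)" using d0 c0 kf by linarith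
    ultimately show ?thesis using A(1) by simp
  qed
  have dist1: "min_dist_ge (bch_code e \<alpha> n \<delta> 1) \<delta>"
    unfolding min_dist_ge_def
  proof (intro ballI impI)
    fix c assume c: "c \<in> bch_code e \<alpha> n \<delta> 1" "c \<noteq> 0"
    from c(1) have cc: "c \<in> cyclic_code n (Lcm (B.mp ` {1..m}))" unfolding bch_code_def gen1 .
    hence dc: "degree c < n" by (simp add: cyclic_code_def)
    have rts: "\<forall>j < \<delta> - 1. poly (map_poly e c) (B.\<beta> ^ (1 + j)) = 0"
    proof (intro allI impI)
      fix j assume "j < \<delta> - 1"
      have "{1..m} \<subseteq> B.Zs {1..m}" using mn by (intro B.I_sub_Zs) auto
      moreover have "1 + j \<in> {1..m}" using \<open>j < \<delta> - 1\<close> m_def by simp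
      ultimately have "1 + j \<in> B.Zs {1..m}" by blast
      thus "poly (map_poly e c) (B.\<beta> ^ (1 + j)) = 0" by (rule B.code_roots[OF cc])
    qed
    show "\<delta> \<le> hweight c" using c(2) dc rts by (rule B.bch_bound[of c \<delta> 1])
  qed
  have dist0: "min_dist_ge (bch_code e \<alpha> n (\<delta>+1) 0) (2 * \<delta>)"
    unfolding min_dist_ge_def
  proof (intro ballI impI)
    fix c assume c: "c \<in> bch_code e \<alpha> n (\<delta>+1) 0" "c \<noteq> 0"
    from c(1) have cc: "c \<in> cyclic_code n (Lcm (B.mp ` {0..m}))" unfolding bch_code_def gen0 .
    hence dc: "degree c < n" by (simp add: cyclic_code_def)
    have rts: "\<forall>j < 2 * \<delta> - 1. poly (map_poly e c) (B.\<beta> ^ (n - m + j)) = 0"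
    proof (intro allI impI)
      fix j assume "j < 2 * \<delta> - 1"
      hence "j < 2 * m + 1" using m by simp
      then obtain z where z: "z \<in> B.Zs {0..m}" "B.\<beta> ^ (n - m + j) = B.\<beta> ^ z"
        using B.second_roots m by blast
      show "poly (map_poly e c) (B.\<beta> ^ (n - m + j)) = 0"
        using B.code_roots[OF cc z(1)] z(2) by simp
    qed
    show "2 * \<delta> \<le> hweight c" using c(2) dc rts by (rule B.bch_bound[of c "2 * \<delta>" "n - m"])
  qed
  have deg1: "\<forall>c\<in>bch_code e \<alpha> n \<delta> 1. degree c < n" by (simp add: bch_code_def cyclic_code_def)
  have deg0: "\<forall>c\<in>bch_code e \<alpha> n (\<delta>+1) 0. degree c < n" by (simp add: bch_code_def cyclic_code_def)
  show ?thesis unfolding code_params_def using card1 card0 dist1 dist0 deg1 deg0 by simp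
qed


end
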